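(* Let $d,n\ge1$, $L\ge0$, let $p_x,p_w$ be distributions on $\mathbb{R}^d$, let $x^{(1)},\dots,x^{(n+1)}$ be i.i.d. from $p_x$, $w_\star\sim p_w$, and $y^{(i)}=\langle w_\star,x^{(i)}\rangle$ for $i=1,\dots,n+1$. Let $$Z_0=\begin{bmatrix} x^{(1)} & \cdots & x^{(n)} & x^{(n+1)}\\ y^{(1)} & \cdots & y^{(n)} & 0\end{bmatrix},\qquad \bar Z_0=\begin{bmatrix} x^{(1)} & \cdots & x^{(n)} & x^{(n+1)}\\ y^{(1)} & \cdots & y^{(n)} & y^{(n+1)}\end{bmatrix},$$ and $M=\begin{bmatrix} I_n & 0\\ 0& 0\end{bmatrix}\in\mathbb{R}^{(n+1)\times(n+1)}$. For matrices $A_i,B_i\in\mathbb{R}^{d\times d}$ with $A_i$ symmetric ($i=0,\dots,L-1$), let $P_i=\begin{bmatrix}B_i&0\\0&1\end{bmatrix}$, $Q_i=\begin{bmatrix}A_i&0\\0&0\end{bmatrix}$, and define $Z_{i+1}=Z_i+\frac1nP_iZ_iM(Z_i^\top Q_iZ_i)$ and $\bar Z_{i+1}=\bar Z_i+\frac1nP_i\bar Z_iM(\bar Z_i^\top Q_i\bar Z_i)$. Let $\bar Y_L\in\mathbb{R}^{1\times(n+1)}$ be the last row of $\bar Z_L$. Then (assuming the expectations are finite) $$\mathbb{E}\Big[\big([Z_L]_{d+1,n+1}+w_\star^\top x^{(n+1)}\big)^2\Big]=\mathbb{E}\Big[\mathrm{Tr}\big((I-M)\bar Y_L^\top\bar 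Y_L(I-M)\big)\Big].$$
   Context: $[X]_{i,j}$ denotes the $(i,j)$ entry of a matrix; $I=I_{n+1}$. *)

theory Defs
  imports "HOL-Probability.Probability"
begin

text \<open>Matrices are represented as functions nat => nat => real (0-based indices);
  the dimensions are carried explicitly by the operations below.
  Vectors in R^d are functions nat => real, only the coordinates 0..d-1 matter.\<close>

type_synonym mat = "nat \<Rightarrow> nat \<Rightarrow> real"

definition mmul :: "nat \<Rightarrow> mat \<Rightarrow> mat \<Rightarrow> mat" where
  "mmul k X Y = (\<lambda>i j. \<Sum>l<k. X i l * Y l j)"

definition mtrans :: "mat \<Rightarrow> mat" where
  "mtrans X = (\<lambda>i j. X j i)"

definition madd :: "mat \<Rightarrow> mat \<Rightarrow> mat" where
  "madd X Y = (\<lambda>i j. X i j + Y i j)"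

definition msub :: "mat \<Rightarrow> mat \<Rightarrow> mat" where
  "msub X Y = (\<lambda>i j. X i j - Y i j)"

definition mscale :: "real \<Rightarrow> mat \<Rightarrow> mat" where
  "mscale c X = (\<lambda>i j. c * X i j)"

definition idm :: mat where
  "idm = (\<lambda>i j. if i = j then 1 else 0)"

definition mtrace :: "nat \<Rightarrow> mat \<Rightarrow> real" where
  "mtrace k X = (\<Sum>i<k. X i i)"

definition inner_d :: "nat \<Rightarrow> (nat \<Rightarrow> real) \<Rightarrow> (nat \<Rightarrow> real) \<Rightarrow> real" where
  "inner_d d u v = (\<Sum>k<d. u k * v k)"

text \<open>Z_0 (last entry of last row is 0) and bar Z_0 : (d+1) x (n+1);
  column j (0-based, j \<le> n) is x^(j+1); row d is the label row.\<close>
definition Z0 :: "nat \<Rightarrow> nat \<Rightarrow> (nat \<Rightarrow> nat \<Rightarrow> real) \<Rightarrow> (nat \<Rightarrow> real) \<Rightarrow> mat" where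
  "Z0 d n xs w = (\<lambda>i j. if i < d then xs j i
                        else if j < n then inner_d d w (xs j) else 0)"

definition Zbar0 :: "nat \<Rightarrow> nat \<Rightarrow> (nat \<Rightarrow> nat \<Rightarrow> real) \<Rightarrow> (nat \<Rightarrow> real) \<Rightarrow> mat" where
  "Zbar0 d n xs w = (\<lambda>i j. if i < d then xs j i else inner_d d w (xs j))"

definition Mmat :: "nat \<Rightarrow> mat" where
  "Mmat n = (\<lambda>i j. if i = j \<and> i < n then 1 else 0)"

definition Pmat :: "nat \<Rightarrow> mat \<Rightarrow> mat" where
  "Pmat d B = (\<lambda>r c. if r < d \<and> c < d then B r c else if r = d \<and> c = d then 1 else 0)"

definition Qmat :: "nat \<Rightarrow> mat \<Rightarrow> mat" where
  "Qmat d A = (\<lambda>r c. if r < d \<and> c < d then A r c else 0)"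

definition layer :: "nat \<Rightarrow> nat \<Rightarrow> mat \<Rightarrow> mat \<Rightarrow> mat \<Rightarrow> mat" where
  "layer d n A B Z = madd Z (mscale (1 / real n)
      (mmul (n+1) (mmul (n+1) (mmul (d+1) (Pmat d B) Z) (Mmat n))
                  (mmul (d+1) (mmul (d+1) (mtrans Z) (Qmat d A)) Z)))"

fun iterZ :: "nat \<Rightarrow> nat \<Rightarrow> (nat \<Rightarrow> mat) \<Rightarrow> (nat \<Rightarrow> mat) \<Rightarrow> mat \<Rightarrow> nat \<Rightarrow> mat" where
  "iterZ d n A B Z 0 = Z"
| "iterZ d n A B Z (Suc i) = layer d n (A i) (B i) (iterZ d n A B Z i)"

end

theory Submission
  imports Defs
begin

definition updm :: "nat \<Rightarrow> nat \<Rightarrow> mat \<Rightarrow> mat \<Rightarrow> mat \<Rightarrow> mat" where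
  "updm d n A B Z = mscale (1 / real n)
      (mmul (n+1) (mmul (n+1) (mmul (d+1) (Pmat d B) Z) (Mmat n))
                  (mmul (d+1) (mmul (d+1) (mtrans Z) (Qmat d A)) Z))"

lemma layer_upd: "layer d n A B Z = madd Z (updm d n A B Z)"
  by (simp add: layer_def updm_def)

lemma upd_eq:
  assumes h1: "\<forall>i<d. \<forall>j. Z i j = Zb i j" and h2: "\<forall>j<n. Z d j = Zb d j"
  shows "updm d n A B Z = updm d n A B Zb"
proof -
  have t: "mmul (d+1) (mtrans Z) (Qmat d A) = mmul (d+1) (mtrans Zb) (Qmat d A)"
    unfolding mmul_def mtrans_def Qmat_def
    by (intro ext sum.cong refl) (auto simp: h1)
  have e1: "mmul (d+1) (mmul (d+1) (mtrans Z) (Qmat d A)) Z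
          = mmul (d+1) (mmul (d+1) (mtrans Zb) (Qmat d A)) Zb"
    unfolding t
  proof (intro ext)
    fix i j
    show "mmul (d+1) (mmul (d+1) (mtrans Zb) (Qmat d A)) Z i j
          = mmul (d+1) (mmul (d+1) (mtrans Zb) (Qmat d A)) Zb i j"
      unfolding mmul_def[of "d+1" _ Z] mmul_def[of "d+1" _ Zb]
    proof (intro sum.cong refl)
      fix x assume "x \<in> {..<d+1}"
      then have "x < d \<or> x = d" by auto
      moreover have "mmul (d+1) (mtrans Zb) (Qmat d A) i d = 0"
        by (simp add: mmul_def Qmat_def)
      ultimately show "mmul (d+1) (mtrans Zb) (Qmat d A) i x * Z x j =
         mmul (d+1) (mtrans Zb) (Qmat d A) i x * Zb x j" using h1 by auto
    qed
  qed
  have e2: "mmul (n+1) (mmul (d+1) (Pmat d B) Z) (Mmat n)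
          = mmul (n+1) (mmul (d+1) (Pmat d B) Zb) (Mmat n)"
  proof (intro ext)
    fix i j
    show "mmul (n+1) (mmul (d+1) (Pmat d B) Z) (Mmat n) i j
          = mmul (n+1) (mmul (d+1) (Pmat d B) Zb) (Mmat n) i j"
      unfolding mmul_def Mmat_def
    proof (intro sum.cong refl)
      fix l assume "l \<in> {..<n+1}"
      show "(\<Sum>la<d + 1. Pmat d B i la * Z la l) * (if l = j \<and> l < n then 1 else 0) =
         (\<Sum>la<d + 1. Pmat d B i la * Zb la l) * (if l = j \<and> l < n then 1 else 0)"
      proof (cases "l < n")
        case True
        have "(\<Sum>la<d + 1. Pmat d B i la * Z la l) = (\<Sum>la<d + 1. Pmat d B i la * Zb la l)"
        proof (intro sum.cong refl)
          fix la assume "la \<in> {..<d+1}"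
          then have "la < d \<or> la = d" by auto
          then show "Pmat d B i la * Z la l = Pmat d B i la * Zb la l"
            using h1 h2 True by auto
        qed
        then show ?thesis by simp
      qed simp
    qed
  qed
  show ?thesis unfolding updm_def e1 e2 ..
qed

definition Rrel :: "nat \<Rightarrow> nat \<Rightarrow> real \<Rightarrow> mat \<Rightarrow> mat \<Rightarrow> bool" where
  "Rrel d n c Z Zb \<longleftrightarrow> (\<forall>i<d. \<forall>j. Z i j = Zb i j) \<and> (\<forall>j<n. Z d j = Zb d j) \<and> Zb d n = Z d n + c"

lemma Rrel_iter:
  assumes "Rrel d n c Z Zb"
  shows "Rrel d n c (iterZ d n A B Z L) (iterZ d n A B Zb L)"
  using assms
proof (induction L)
  case 0 then show ?case by simp
next
  case (Suc L)
  let ?Z = "iterZ d n A B Z L" and ?Zb = "iterZ d n A B Zb L"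
  have R: "Rrel d n c ?Z ?Zb" using Suc by blast
  then have "updm d n (A L) (B L) ?Z = updm d n (A L) (B L) ?Zb"
    unfolding Rrel_def by (intro upd_eq) auto
  then show ?case using R unfolding Rrel_def
    by (simp add: layer_upd madd_def)
qed

lemma rhs_simp:
  fixes Zb :: mat
  shows "(let Y = (\<lambda>i j. if i = 0 then Zb d j else 0);
                IM = msub idm (Mmat n)
            in mtrace (n+1) (mmul (n+1) (mmul 1 (mmul (n+1) IM (mtrans Y)) Y) IM)) = (Zb d n)^2"
proof -
  define Y where "Y = (\<lambda>(i::nat) j. if i = 0 then Zb d j else 0 :: real)"
  define IM where "IM = msub idm (Mmat n)"
  have IM: "IM i l = (if i = l \<and> i \<ge> n then 1 else 0)" for i l
    by (auto simp: IM_def msub_def idm_def Mmat_def)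
  have s1: "mmul (n+1) IM (mtrans Y) = (\<lambda>i j. if i = n then Y j n else 0)"
  proof (intro ext)
    fix i j
    have "mmul (n+1) IM (mtrans Y) i j = (\<Sum>l<n+1. (if l = n \<and> i = n then Y j n else 0))"
      unfolding mmul_def mtrans_def by (intro sum.cong refl) (auto simp: IM)
    also have "\<dots> = (if i = n then Y j n else 0)"
      by (simp add: sum.delta)
    finally show "mmul (n+1) IM (mtrans Y) i j = (if i = n then Y j n else 0)" .
  qed
  have s2: "mmul 1 (\<lambda>i j. if i = n then Y j n else 0) Y = (\<lambda>i j. if i = n then Zb d n * Zb d j else 0)"
    unfolding mmul_def Y_def by (intro ext) simp
  have s3: "mmul (n+1) (\<lambda>i j. if i = n then Zb d n * Zb d j else 0) IM i i
      = (if i = n then (Zb d n)^2 else 0)" for i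
  proof -
    have "mmul (n+1) (\<lambda>i j. if i = n then Zb d n * Zb d j else 0) IM i i
        = (\<Sum>l<n+1. (if l = n \<and> i = n then (Zb d n)^2 else 0))"
      unfolding mmul_def by (intro sum.cong refl) (auto simp: IM power2_eq_square)
    also have "\<dots> = (if i = n then (Zb d n)^2 else 0)"
      by (simp add: sum.delta)
    finally show ?thesis .
  qed
  show ?thesis
    unfolding Let_def Y_def[symmetric] IM_def[symmetric] s1 s2 mtrace_def s3
    by (simp add: sum.delta)
qed

theorem lemma5:
  fixes d n L :: nat
    and px pw :: "(nat \<Rightarrow> real) measure"
    and A B :: "nat \<Rightarrow> mat"
  defines "\<Omega> \<equiv> (PiM {..n} (\<lambda>_. px)) \<Otimes>\<^sub>M pw"
  assumes "d \<ge> 1" and "n \<ge> 1"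
    and "prob_space px" and "sets px = sets (PiM {..<d} (\<lambda>_. borel))"
    and "prob_space pw" and "sets pw = sets (PiM {..<d} (\<lambda>_. borel))"
    and "\<forall>i<L. \<forall>j<d. \<forall>k<d. A i j k = A i k j"
    and "integrable \<Omega> (\<lambda>(xs, w).
           (iterZ d n A B (Z0 d n xs w) L d n + inner_d d w (xs n))\<^sup>2)"
    and "integrable \<Omega> (\<lambda>(xs, w).
           (let Zb = iterZ d n A B (Zbar0 d n xs w) L;
                Y = (\<lambda>i j. if i = 0 then Zb d j else 0);
                IM = msub idm (Mmat n)
            in mtrace (n+1) (mmul (n+1) (mmul 1 (mmul (n+1) IM (mtrans Y)) Y) IM)))"
  shows "(\<integral>(xs, w). (iterZ d n A B (Z0 d n xs w) L d n + inner_d d w (xs n))\<^sup>2 \<partial>\<Omega>)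
       = (\<integral>(xs, w).
           (let Zb = iterZ d n A B (Zbar0 d n xs w) L;
                Y = (\<lambda>i j. if i = 0 then Zb d j else 0);
                IM = msub idm (Mmat n)
            in mtrace (n+1) (mmul (n+1) (mmul 1 (mmul (n+1) IM (mtrans Y)) Y) IM)) \<partial>\<Omega>)"
proof -
  have pw: "(iterZ d n A B (Z0 d n xs w) L d n + inner_d d w (xs n))\<^sup>2 =
           (let Zb = iterZ d n A B (Zbar0 d n xs w) L;
                Y = (\<lambda>i j. if i = 0 then Zb d j else 0);
                IM = msub idm (Mmat n)
            in mtrace (n+1) (mmul (n+1) (mmul 1 (mmul (n+1) IM (mtrans Y)) Y) IM))" for xs w
  proof -
    have "Rrel d n (inner_d d w (xs n)) (Z0 d n xs w) (Zbar0 d n xs w)"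
      unfolding Rrel_def Z0_def Zbar0_def by auto
    then have "Rrel d n (inner_d d w (xs n)) (iterZ d n A B (Z0 d n xs w) L) (iterZ d n A B (Zbar0 d n xs w) L)"
      by (rule Rrel_iter)
    then have "iterZ d n A B (Zbar0 d n xs w) L d n = iterZ d n A B (Z0 d n xs w) L d n + inner_d d w (xs n)"
      unfolding Rrel_def by blast
    then show ?thesis
      using rhs_simp[where Zb="iterZ d n A B (Zbar0 d n xs w) L" and d=d and n=n] by (simp add: Let_def)
  qed
  show ?thesis
    by (rule Bochner_Integration.integral_cong) (auto simp: pw)
qed

end
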